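(* Let $G$ be a group with a rotary pair $(a,z)$, and let $H=\langle a\rangle$ and $J=\langle z\rangle\cong\mathbb Z_2$. Then $\Gamma=\mathrm{Cos}(G,H,J)$ is a $G$-vertex-rotary graph of valency $k=|H:H\cap H^z|$ and edge-multiplicity $\lambda=|H\cap H^z|$, and $|a|=k\lambda$. Moreover, if $|a|\ge 3$ and $H\ne H^z$, then $\Gamma$ is neither $\mathbf K_2^{(\lambda)}$ nor a simple cycle.
   Context: A rotary pair for $G$ is $(a,z)$ with $G=\langle a,z\rangle$, $|a|$ finite, $|z|=2$, $z\notin\langle a\rangle$. $\mathrm{Cos}(G,H,J)$: vertex set $\{Hx:x\in G\}$, edge set $\{Jy:y\in G\}$, $Hx$ incident with $Jy$ iff $yx^{-1}\in JH$ (multiple edges allowed). A graph is $G$-vertex-rotary if $G$ is arc-transitive and each vertex stabiliser induces a transitive cyclic group on the edges incident with that vertex. $\mathbf K_2^{(\lambda)}$ is the graph with two vertices and $\lambda$ edges joining them; a simple cycle is a connected simple graph all of whose vertices have valency 2. *)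

theory Defs
  imports "HOL-Algebra.Algebra"
begin

text \<open>Multigraphs are given by a vertex set V, an edge set E and an incidence
  relation inc (inc v e: vertex v is incident with edge e); multiple edges allowed.\<close>

definition mg_adj :: "'v set \<Rightarrow> 'e set \<Rightarrow> ('v \<Rightarrow> 'e \<Rightarrow> bool) \<Rightarrow> 'v \<Rightarrow> 'v \<Rightarrow> bool" where
  "mg_adj V E inc u w \<longleftrightarrow> u \<in> V \<and> w \<in> V \<and> u \<noteq> w \<and> (\<exists>e\<in>E. inc u e \<and> inc w e)"

definition mg_edges_at :: "'e set \<Rightarrow> ('v \<Rightarrow> 'e \<Rightarrow> bool) \<Rightarrow> 'v \<Rightarrow> 'e set" where
  "mg_edges_at E inc v = {e \<in> E. inc v e}"

definition mg_ends :: "'v set \<Rightarrow> ('v \<Rightarrow> 'e \<Rightarrow> bool) \<Rightarrow> 'e \<Rightarrow> 'v set" where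
  "mg_ends V inc e = {v \<in> V. inc v e}"

definition mg_valency :: "'v set \<Rightarrow> 'e set \<Rightarrow> ('v \<Rightarrow> 'e \<Rightarrow> bool) \<Rightarrow> nat \<Rightarrow> bool" where
  "mg_valency V E inc k \<longleftrightarrow>
     (\<forall>v\<in>V. finite {w. mg_adj V E inc v w} \<and> card {w. mg_adj V E inc v w} = k)"

definition mg_edge_multiplicity :: "'v set \<Rightarrow> 'e set \<Rightarrow> ('v \<Rightarrow> 'e \<Rightarrow> bool) \<Rightarrow> nat \<Rightarrow> bool" where
  "mg_edge_multiplicity V E inc lam \<longleftrightarrow>
     (\<forall>u w. mg_adj V E inc u w \<longrightarrow>
        finite {e\<in>E. inc u e \<and> inc w e} \<and> card {e\<in>E. inc u e \<and> inc w e} = lam)"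

definition is_K2_mult :: "'v set \<Rightarrow> 'e set \<Rightarrow> ('v \<Rightarrow> 'e \<Rightarrow> bool) \<Rightarrow> nat \<Rightarrow> bool" where
  "is_K2_mult V E inc lam \<longleftrightarrow>
     (\<exists>u w. u \<noteq> w \<and> V = {u, w} \<and> finite E \<and> card E = lam \<and>
        (\<forall>e\<in>E. mg_ends V inc e = {u, w}))"

definition mg_simple :: "'v set \<Rightarrow> 'e set \<Rightarrow> ('v \<Rightarrow> 'e \<Rightarrow> bool) \<Rightarrow> bool" where
  "mg_simple V E inc \<longleftrightarrow>
     (\<forall>e\<in>E. finite (mg_ends V inc e) \<and> card (mg_ends V inc e) = 2) \<and>
     (\<forall>e\<in>E. \<forall>e'\<in>E. mg_ends V inc e = mg_ends V inc e' \<longrightarrow> e = e')"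

definition mg_connected :: "'v set \<Rightarrow> 'e set \<Rightarrow> ('v \<Rightarrow> 'e \<Rightarrow> bool) \<Rightarrow> bool" where
  "mg_connected V E inc \<longleftrightarrow> V \<noteq> {} \<and> (\<forall>u\<in>V. \<forall>w\<in>V. (mg_adj V E inc)\<^sup>*\<^sup>* u w)"

definition is_simple_cycle :: "'v set \<Rightarrow> 'e set \<Rightarrow> ('v \<Rightarrow> 'e \<Rightarrow> bool) \<Rightarrow> bool" where
  "is_simple_cycle V E inc \<longleftrightarrow>
     mg_simple V E inc \<and> mg_connected V E inc \<and> mg_valency V E inc 2"

text \<open>G acts (on the right) on the multigraph by automorphisms via actV, actE;
  G-vertex-rotary: G is arc-transitive (transitive on vertices and on incident
  vertex-edge pairs) and each vertex stabiliser induces a transitive cyclic group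
  on the edges incident with that vertex.\<close>
definition vertex_rotary ::
  "('g, 'b) monoid_scheme \<Rightarrow> 'v set \<Rightarrow> 'e set \<Rightarrow> ('v \<Rightarrow> 'e \<Rightarrow> bool)
     \<Rightarrow> ('v \<Rightarrow> 'g \<Rightarrow> 'v) \<Rightarrow> ('e \<Rightarrow> 'g \<Rightarrow> 'e) \<Rightarrow> bool" where
  "vertex_rotary G V E inc actV actE \<longleftrightarrow>
     \<comment> \<open>right action by automorphisms\<close>
     (\<forall>v\<in>V. \<forall>g\<in>carrier G. actV v g \<in> V) \<and>
     (\<forall>e\<in>E. \<forall>g\<in>carrier G. actE e g \<in> E) \<and>
     (\<forall>v\<in>V. actV v \<one>\<^bsub>G\<^esub> = v) \<and>
     (\<forall>e\<in>E. actE e \<one>\<^bsub>G\<^esub> = e) \<and>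
     (\<forall>v\<in>V. \<forall>g\<in>carrier G. \<forall>h\<in>carrier G. actV v (g \<otimes>\<^bsub>G\<^esub> h) = actV (actV v g) h) \<and>
     (\<forall>e\<in>E. \<forall>g\<in>carrier G. \<forall>h\<in>carrier G. actE e (g \<otimes>\<^bsub>G\<^esub> h) = actE (actE e g) h) \<and>
     (\<forall>v\<in>V. \<forall>e\<in>E. \<forall>g\<in>carrier G. inc v e \<longleftrightarrow> inc (actV v g) (actE e g)) \<and>
     \<comment> \<open>arc-transitivity\<close>
     (\<forall>v\<in>V. \<forall>v'\<in>V. \<exists>g\<in>carrier G. actV v g = v') \<and>
     (\<forall>v\<in>V. \<forall>e\<in>E. \<forall>v'\<in>V. \<forall>e'\<in>E. inc v e \<longrightarrow> inc v' e' \<longrightarrow>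
        (\<exists>g\<in>carrier G. actV v g = v' \<and> actE e g = e')) \<and>
     \<comment> \<open>stabilisers induce transitive cyclic groups on incident edges\<close>
     (\<forall>v\<in>V.
        (\<forall>e\<in>mg_edges_at E inc v. \<forall>e'\<in>mg_edges_at E inc v.
            \<exists>g\<in>carrier G. actV v g = v \<and> actE e g = e') \<and>
        (\<exists>c\<in>carrier G. actV v c = v \<and>
            (\<forall>g\<in>carrier G. actV v g = v \<longrightarrow>
               (\<exists>n::int. \<forall>e\<in>mg_edges_at E inc v. actE e g = actE e (c [^]\<^bsub>G\<^esub> n)))))"

text \<open>Coset graph Cos(G,H,J): vertices the right cosets Hx, edges the right cosets Jy,
  Hx incident with Jy iff y x^-1 \<in> JH.\<close>
definition cos_inc :: "('g, 'b) monoid_scheme \<Rightarrow> 'g set \<Rightarrow> 'g set \<Rightarrow> 'g set \<Rightarrow> 'g set \<Rightarrow> bool" where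
  "cos_inc G H J A B \<longleftrightarrow>
     (\<exists>x\<in>carrier G. \<exists>y\<in>carrier G. A = r_coset G H x \<and> B = r_coset G J y \<and>
        monoid.mult G y (m_inv G x) \<in> set_mult G J H)"

end

theory Submission
  imports Defs
begin


locale rotp = group G for G (structure) +
  fixes a z :: 'a
  assumes a_in: "a \<in> carrier G" and z_in: "z \<in> carrier G"
    and a_fin: "ord a \<noteq> 0" and z_ord: "ord z = 2"
    and z_notin: "z \<notin> generate G {a}"
begin

abbreviation "HH \<equiv> generate G {a}"
abbreviation "JJ \<equiv> generate G {z}"
abbreviation "HZ \<equiv> (inv z) <# (HH #> z)"

lemma zz: "z \<otimes> z = \<one>"
proof -
  have "z [^] ord z = \<one>" using z_in by simp
  thus ?thesis using z_in by (simp add: z_ord numeral_2_eq_2)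
qed

lemma invz: "inv z = z"
  using zz z_in by (simp add: inv_equality)

lemma zzx: "x \<in> carrier G \<Longrightarrow> z \<otimes> (z \<otimes> x) = x"
  using zz z_in by (simp add: m_assoc[symmetric])

lemma H_sub: "subgroup HH G" using a_in by (simp add: generate_is_subgroup)
lemma J_sub: "subgroup JJ G" using z_in by (simp add: generate_is_subgroup)

lemma H_card: "card HH = ord a" using generate_pow_card[OF a_in] by simp
lemma H_fin: "finite HH" using H_card a_fin by (intro card_ge_0_finite) simp

lemma J_eq: "JJ = {\<one>, z}"
proof
  show "JJ \<subseteq> {\<one>, z}"
  proof
    fix x assume "x \<in> JJ" thus "x \<in> {\<one>, z}"
      by (induction rule: generate.induct) (auto simp: invz zz z_in)
  qed
  show "{\<one>, z} \<subseteq> JJ" using generate.one[of G "{z}"] generate.incl[of z "{z}" G] by simp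
qed

lemma rcos_eq: "subgroup S G \<Longrightarrow> x \<in> carrier G \<Longrightarrow> y \<in> carrier G \<Longrightarrow>
   (S #> x = S #> y) \<longleftrightarrow> x \<otimes> inv y \<in> S"
proof -
  assume S: "subgroup S G" and x: "x \<in> carrier G" and y: "y \<in> carrier G"
  show ?thesis
  proof
    assume "S #> x = S #> y"
    hence "x \<in> S #> y" using rcos_self[OF x S] by simp
    thus "x \<otimes> inv y \<in> S" using subgroup.rcos_module[OF S is_group y x] by simp
  next
    assume "x \<otimes> inv y \<in> S"
    hence "x \<in> S #> y" using subgroup.rcos_module[OF S is_group y x] by simp
    thus "S #> x = S #> y" using repr_independence[OF _ y S] by simp
  qed
qed

lemma H_car: "h \<in> HH \<Longrightarrow> h \<in> carrier G" by (rule subgroup.mem_carrier[OF H_sub])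

lemma HZ_eq: "HZ = (\<lambda>h. z \<otimes> h \<otimes> z) ` HH"
  by (auto simp: l_coset_def r_coset_def invz m_assoc H_car z_in)

lemma HZ_mem: "t \<in> HZ \<longleftrightarrow> t \<in> carrier G \<and> z \<otimes> t \<otimes> z \<in> HH"
proof
  assume "t \<in> HZ" then obtain h where "h \<in> HH" "t = z \<otimes> h \<otimes> z" by (auto simp: HZ_eq)
  moreover have "z \<otimes> (z \<otimes> h \<otimes> z) \<otimes> z = h" using z_in H_car[OF \<open>h \<in> HH\<close>] by (simp add: m_assoc zzx zz)
  ultimately show "t \<in> carrier G \<and> z \<otimes> t \<otimes> z \<in> HH" using z_in H_car by simp
next
  assume a: "t \<in> carrier G \<and> z \<otimes> t \<otimes> z \<in> HH"
  have "z \<otimes> (z \<otimes> t \<otimes> z) \<otimes> z = t" using a z_in by (simp add: m_assoc zzx zz)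
  thus "t \<in> HZ" unfolding HZ_eq using a by (metis image_eqI)
qed

end


context rotp begin

abbreviation "KK \<equiv> HH \<inter> HZ"

lemma cz_mult: "s \<in> carrier G \<Longrightarrow> t \<in> carrier G \<Longrightarrow>
  z \<otimes> (s \<otimes> t) \<otimes> z = (z \<otimes> s \<otimes> z) \<otimes> (z \<otimes> t \<otimes> z)"
  using z_in by (simp add: m_assoc zzx)

lemma cz_inv: "t \<in> carrier G \<Longrightarrow> z \<otimes> inv t \<otimes> z = inv (z \<otimes> t \<otimes> z)"
  using z_in by (simp add: m_assoc inv_mult_group invz)

lemma K_mem: "t \<in> KK \<longleftrightarrow> t \<in> HH \<and> z \<otimes> t \<otimes> z \<in> HH"
  using HZ_mem[of t] H_car[of t] by auto

lemma K_sub: "subgroup KK G"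
proof (rule subgroupI)
  show "KK \<subseteq> carrier G" using H_car by blast
  have "z \<otimes> \<one> \<otimes> z \<in> HH" using subgroup.one_closed[OF H_sub] z_in zz by simp
  hence "\<one> \<in> KK" using K_mem[of \<one>] subgroup.one_closed[OF H_sub] by blast
  thus "KK \<noteq> {}" by blast
  fix s t assume s: "s \<in> KK" and t: "t \<in> KK"
  have sH: "s \<in> HH" "z \<otimes> s \<otimes> z \<in> HH" using s K_mem by auto
  have tH: "t \<in> HH" "z \<otimes> t \<otimes> z \<in> HH" using t K_mem by auto
  have sc: "s \<in> carrier G" "t \<in> carrier G" using sH tH H_car by auto
  have "inv s \<in> HH" using sH subgroup.m_inv_closed[OF H_sub] by simp
  moreover have "z \<otimes> inv s \<otimes> z \<in> HH" using cz_inv[OF sc(1)] sH subgroup.m_inv_closed[OF H_sub] by simp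
  ultimately show "inv s \<in> KK" using K_mem[of "inv s"] by blast
  have "s \<otimes> t \<in> HH" using sH tH subgroup.m_closed[OF H_sub] by simp
  moreover have "z \<otimes> (s \<otimes> t) \<otimes> z \<in> HH" using cz_mult[OF sc] sH tH subgroup.m_closed[OF H_sub] by simp
  ultimately show "s \<otimes> t \<in> KK" using K_mem[of "s \<otimes> t"] by blast
qed

lemma J_coset: "y \<in> carrier G \<Longrightarrow> JJ #> y = {y, z \<otimes> y}"
  by (auto simp: r_coset_def J_eq)

lemma Jz: "y \<in> carrier G \<Longrightarrow> JJ #> (z \<otimes> y) = JJ #> y"
  using rcos_eq[OF J_sub] z_in J_eq by (simp add: m_assoc)

end


context rotp begin
lemma inc_iff: assumes y: "y \<in> carrier G"
  shows "cos_inc G HH JJ A (JJ #> y) \<longleftrightarrow> (A = HH #> y \<or> A = HH #> (z \<otimes> y))"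
proof
  assume "cos_inc G HH JJ A (JJ #> y)"
  then obtain x y' where x: "x \<in> carrier G" and y': "y' \<in> carrier G" and A: "A = HH #> x"
    and e: "JJ #> y = JJ #> y'" and m: "y' \<otimes> inv x \<in> JJ <#> HH"
    unfolding cos_inc_def by blast
  have y'c: "y' = y \<or> y' = z \<otimes> y" using e y y' J_coset rcos_self[OF y' J_sub] by auto
  obtain j h where j: "j \<in> JJ" and h: "h \<in> HH" and jh: "y' \<otimes> inv x = j \<otimes> h"
    using m unfolding set_mult_def by blast
  have A': "A = HH #> y' \<or> A = HH #> (z \<otimes> y')"
  proof (cases "j = \<one>")
    case True
    hence "y' \<otimes> inv x \<in> HH" using jh h H_car by simp
    thus ?thesis using rcos_eq[OF H_sub y' x] A by simp
  next
    case False
    hence jz: "j = z" using j J_eq by auto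
    have "z \<otimes> y' \<otimes> inv x = h" using jh jz z_in y' x h H_car
      by (simp add: m_assoc zzx)
    hence "(z \<otimes> y') \<otimes> inv x \<in> HH" using h by simp
    hence "HH #> (z \<otimes> y') = HH #> x" using rcos_eq[OF H_sub m_closed[OF z_in y'] x] by simp
    thus ?thesis using A by simp
  qed
  thus "A = HH #> y \<or> A = HH #> (z \<otimes> y)" using y'c zzx y by auto
next
  assume "A = HH #> y \<or> A = HH #> (z \<otimes> y)"
  thus "cos_inc G HH JJ A (JJ #> y)"
  proof
    assume A: "A = HH #> y"
    have "y \<otimes> inv y = \<one> \<otimes> \<one>" using y by simp
    moreover have "\<one> \<otimes> \<one> \<in> JJ <#> HH" unfolding set_mult_def
      using J_eq subgroup.one_closed[OF H_sub] by blast
    ultimately have "y \<otimes> inv y \<in> JJ <#> HH" by simp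
    thus ?thesis unfolding cos_inc_def using A y by blast
  next
    assume A: "A = HH #> (z \<otimes> y)"
    have "y \<otimes> inv (z \<otimes> y) = z \<otimes> \<one>" using y z_in by (simp add: inv_mult_group invz m_assoc[symmetric])
    moreover have "z \<otimes> \<one> \<in> JJ <#> HH" unfolding set_mult_def
      using J_eq subgroup.one_closed[OF H_sub] by blast
    ultimately have "y \<otimes> inv (z \<otimes> y) \<in> JJ <#> HH" by simp
    moreover have "z \<otimes> y \<in> carrier G" using y z_in by simp
    ultimately show ?thesis unfolding cos_inc_def using A y by blast
  qed
qed

end



lemma card_img_eq:
  assumes "\<And>h h'. h \<in> S \<Longrightarrow> h' \<in> S \<Longrightarrow> f h = f h' \<longleftrightarrow> g h = g h'"
  shows "card (f ` S) = card (g ` S)"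
proof -
  define p0 where "p0 = (\<lambda>Y0. g (inv_into S f Y0))"
  have p: "\<And>h. h \<in> S \<Longrightarrow> p0 (f h) = g h"
    unfolding p0_def using assms by (metis f_inv_into_f image_eqI inv_into_into)
  have "inj_on p0 (f ` S)" unfolding inj_on_def using p assms by auto
  moreover have "p0 ` (f ` S) = g ` S" using p by (auto simp: image_iff)
  ultimately show ?thesis by (metis card_image)
qed

context rotp begin

abbreviation "VV \<equiv> rcosets HH"
abbreviation "EE \<equiv> rcosets JJ"
abbreviation "II \<equiv> cos_inc G HH JJ"

lemma xinvx: "x \<in> carrier G \<Longrightarrow> w \<in> carrier G \<Longrightarrow> x \<otimes> (inv x \<otimes> w) = w"
  by (simp add: m_assoc[symmetric])

lemma V_elem: "v \<in> VV \<Longrightarrow> \<exists>x\<in>carrier G. v = HH #> x"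
  unfolding RCOSETS_def by blast
lemma E_elem: "e \<in> EE \<Longrightarrow> \<exists>x\<in>carrier G. e = JJ #> x"
  unfolding RCOSETS_def by blast
lemma V_in: "x \<in> carrier G \<Longrightarrow> HH #> x \<in> VV"
  unfolding RCOSETS_def by blast
lemma E_in: "x \<in> carrier G \<Longrightarrow> JJ #> x \<in> EE"
  unfolding RCOSETS_def by blast

lemma z_notH: "h \<in> HH \<Longrightarrow> z \<otimes> h \<notin> HH"
proof
  assume h: "h \<in> HH" and "z \<otimes> h \<in> HH"
  hence "(z \<otimes> h) \<otimes> inv h \<in> HH" using H_sub subgroup.m_closed subgroup.m_inv_closed by metis
  thus False using z_notin z_in h H_car by (simp add: m_assoc)
qed

lemma adj_iff: assumes x: "x \<in> carrier G"
  shows "mg_adj VV EE II (HH #> x) w \<longleftrightarrow> (\<exists>h\<in>HH. w = HH #> (z \<otimes> h \<otimes> x))"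
proof
  assume "mg_adj VV EE II (HH #> x) w"
  then obtain e where w: "w \<in> VV" and ne: "HH #> x \<noteq> w" and e: "e \<in> EE"
    and i1: "II (HH #> x) e" and i2: "II w e" unfolding mg_adj_def by blast
  obtain y where y: "y \<in> carrier G" and ey: "e = JJ #> y" using E_elem e by blast
  have c1: "HH #> x = HH #> y \<or> HH #> x = HH #> (z \<otimes> y)" using i1 inc_iff y ey by simp
  have c2: "w = HH #> y \<or> w = HH #> (z \<otimes> y)" using i2 inc_iff y ey by simp
  show "\<exists>h\<in>HH. w = HH #> (z \<otimes> h \<otimes> x)"
  proof (cases "HH #> x = HH #> y")
    case True
    hence w': "w = HH #> (z \<otimes> y)" using c2 ne by auto
    have h: "y \<otimes> inv x \<in> HH" using True rcos_eq[OF H_sub y x] by simp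
    have "z \<otimes> (y \<otimes> inv x) \<otimes> x = z \<otimes> y" using x y z_in by (simp add: m_assoc)
    thus ?thesis using h w' by metis
  next
    case False
    hence a: "HH #> x = HH #> (z \<otimes> y)" and w': "w = HH #> y" using c1 c2 ne by auto
    have h: "z \<otimes> y \<otimes> inv x \<in> HH" using a rcos_eq[OF H_sub m_closed[OF z_in y] x] by simp
    have "z \<otimes> (z \<otimes> y \<otimes> inv x) \<otimes> x = y" using x y z_in by (simp add: m_assoc zzx)
    thus ?thesis using h w' by metis
  qed
next
  assume "\<exists>h\<in>HH. w = HH #> (z \<otimes> h \<otimes> x)"
  then obtain h where h: "h \<in> HH" and w: "w = HH #> (z \<otimes> h \<otimes> x)" by blast
  have hc: "h \<in> carrier G" using h H_car by simp
  have wV: "w \<in> VV" using w V_in hc x z_in by simp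
  have ne: "HH #> x \<noteq> w"
  proof
    assume "HH #> x = w"
    hence "HH #> (z \<otimes> h \<otimes> x) = HH #> x" using w by simp
    hence "(z \<otimes> h \<otimes> x) \<otimes> inv x \<in> HH" using rcos_eq[OF H_sub m_closed[OF m_closed[OF z_in hc] x] x] by simp
    thus False using z_notH[OF h] hc x z_in by (simp add: m_assoc)
  qed
  have e: "JJ #> (h \<otimes> x) \<in> EE" using E_in hc x by simp
  have "HH #> (h \<otimes> x) = HH #> x" using rcos_eq[OF H_sub _ x] hc x h by (simp add: m_assoc)
  hence i1: "II (HH #> x) (JJ #> (h \<otimes> x))" using inc_iff hc x by simp
  have i2: "II w (JJ #> (h \<otimes> x))" using inc_iff hc x w z_in by (simp add: m_assoc)
  show "mg_adj VV EE II (HH #> x) w" unfolding mg_adj_def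
    using wV ne e i1 i2 V_in x by blast
qed

lemma nbrs: "x \<in> carrier G \<Longrightarrow> {w. mg_adj VV EE II (HH #> x) w} = (\<lambda>h. HH #> (z \<otimes> h \<otimes> x)) ` HH"
  using adj_iff by auto

lemma nbrs_card: assumes x: "x \<in> carrier G"
  shows "card {w. mg_adj VV EE II (HH #> x) w} = card ((\<lambda>h. KK #> h) ` HH)"
proof -
  have "card ((\<lambda>h. KK #> h) ` HH) = card ((\<lambda>h. HH #> (z \<otimes> h \<otimes> x)) ` HH)"
  proof (rule card_img_eq)
    fix h h' assume h: "h \<in> HH" and h': "h' \<in> HH"
    have hc: "h \<in> carrier G" "h' \<in> carrier G" using h h' H_car by auto
    have hh: "h \<otimes> inv h' \<in> HH" using h h' H_sub subgroup.m_closed subgroup.m_inv_closed by metis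
    have "KK #> h = KK #> h' \<longleftrightarrow> h \<otimes> inv h' \<in> KK" using rcos_eq[OF K_sub] hc by simp
    also have "\<dots> \<longleftrightarrow> z \<otimes> (h \<otimes> inv h') \<otimes> z \<in> HH" using K_mem[of "h \<otimes> inv h'"] hh by blast
    also have "z \<otimes> (h \<otimes> inv h') \<otimes> z = (z \<otimes> h \<otimes> x) \<otimes> inv (z \<otimes> h' \<otimes> x)"
      using hc x z_in by (simp add: m_assoc inv_mult_group invz xinvx)
    also have "\<dots> \<in> HH \<longleftrightarrow> HH #> (z \<otimes> h \<otimes> x) = HH #> (z \<otimes> h' \<otimes> x)"
      using rcos_eq[OF H_sub] hc x z_in by simp
    finally show "KK #> h = KK #> h' \<longleftrightarrow> HH #> (z \<otimes> h \<otimes> x) = HH #> (z \<otimes> h' \<otimes> x)" .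
  qed
  thus ?thesis using nbrs[OF x] by simp
qed

lemma valency: "mg_valency VV EE II (card ((\<lambda>h. KK #> h) ` HH))"
  unfolding mg_valency_def
proof
  fix v assume "v \<in> VV"
  then obtain x where x: "x \<in> carrier G" and v: "v = HH #> x" using V_elem by blast
  show "finite {w. mg_adj VV EE II v w} \<and> card {w. mg_adj VV EE II v w} = card ((\<lambda>h. KK #> h) ` HH)"
    using nbrs[OF x] nbrs_card[OF x] v H_fin by simp
qed

end


context rotp begin

lemma invxx: "x \<in> carrier G \<Longrightarrow> w \<in> carrier G \<Longrightarrow> inv x \<otimes> (x \<otimes> w) = w"
  by (simp add: m_assoc[symmetric])

lemma zeq: "y \<in> carrier G \<Longrightarrow> h \<in> carrier G \<Longrightarrow> x \<in> carrier G \<Longrightarrow>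
   (z \<otimes> y) \<otimes> inv (z \<otimes> h \<otimes> x) = z \<otimes> (y \<otimes> inv x \<otimes> inv h) \<otimes> z"
  using z_in by (simp add: m_assoc inv_mult_group invz)

lemma flag_norm: assumes e: "e \<in> EE" and i: "II v e"
  shows "\<exists>y\<in>carrier G. v = HH #> y \<and> e = JJ #> y"
proof -
  obtain y0 where y0: "y0 \<in> carrier G" and ey: "e = JJ #> y0" using E_elem e by blast
  have "v = HH #> y0 \<or> v = HH #> (z \<otimes> y0)" using i inc_iff y0 ey by simp
  thus ?thesis using Jz y0 ey z_in by (metis m_closed)
qed

lemma mult_set: assumes x: "x \<in> carrier G" and h0: "h0 \<in> HH"
  shows "{e \<in> EE. II (HH #> x) e \<and> II (HH #> (z \<otimes> h0 \<otimes> x)) e}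
     = (\<lambda>t. JJ #> (t \<otimes> h0 \<otimes> x)) ` KK" (is "?S = ?T")
proof
  have h0c: "h0 \<in> carrier G" using h0 H_car by simp
  have ne: "HH #> x \<noteq> HH #> (z \<otimes> h0 \<otimes> x)" using adj_iff[OF x] h0 unfolding mg_adj_def by blast
  show "?S \<subseteq> ?T"
  proof
    fix e assume "e \<in> ?S"
    hence e: "e \<in> EE" and i1: "II (HH #> x) e" and i2: "II (HH #> (z \<otimes> h0 \<otimes> x)) e" by auto
    obtain y where y: "y \<in> carrier G" and u: "HH #> x = HH #> y" and ey: "e = JJ #> y"
      using flag_norm[OF e i1] by blast
    have w: "HH #> (z \<otimes> h0 \<otimes> x) = HH #> (z \<otimes> y)" using i2 inc_iff y ey ne u by auto
    define t where "t = y \<otimes> inv x \<otimes> inv h0"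
    have yx: "y \<otimes> inv x \<in> HH" using u rcos_eq[OF H_sub y x] by simp
    have tH: "t \<in> HH" unfolding t_def using yx h0 H_sub subgroup.m_closed subgroup.m_inv_closed by metis
    have "HH #> (z \<otimes> y) = HH #> (z \<otimes> h0 \<otimes> x)" using w by simp
    hence "(z \<otimes> y) \<otimes> inv (z \<otimes> h0 \<otimes> x) \<in> HH" using rcos_eq[OF H_sub] y h0c x z_in by simp
    hence "z \<otimes> t \<otimes> z \<in> HH" unfolding t_def using zeq y h0c x by simp
    hence tK: "t \<in> KK" using K_mem[of t] tH by blast
    have "t \<otimes> h0 \<otimes> x = y" unfolding t_def using y x h0c by (simp add: m_assoc)
    thus "e \<in> ?T" using tK ey by blast
  qed
  show "?T \<subseteq> ?S"
  proof
    fix e assume "e \<in> ?T"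
    then obtain t where tK: "t \<in> KK" and et: "e = JJ #> (t \<otimes> h0 \<otimes> x)" by blast
    have tc: "t \<in> carrier G" using tK H_car by simp
    define y where "y = t \<otimes> h0 \<otimes> x"
    have y: "y \<in> carrier G" unfolding y_def using tc h0c x by simp
    have e: "e \<in> EE" using et E_in y y_def by simp
    have "y \<otimes> inv x = t \<otimes> h0" unfolding y_def using tc h0c x by (simp add: m_assoc)
    hence "y \<otimes> inv x \<in> HH" using tK h0 H_sub subgroup.m_closed by (metis IntD1)
    hence "HH #> x = HH #> y" using rcos_eq[OF H_sub y x] by simp
    hence i1: "II (HH #> x) e" using inc_iff y et y_def by simp
    have "y \<otimes> inv x \<otimes> inv h0 = t" unfolding y_def using tc h0c x by (simp add: m_assoc)
    hence "(z \<otimes> y) \<otimes> inv (z \<otimes> h0 \<otimes> x) = z \<otimes> t \<otimes> z" using zeq y h0c x by simp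
    hence "(z \<otimes> y) \<otimes> inv (z \<otimes> h0 \<otimes> x) \<in> HH" using tK K_mem[of t] by auto
    hence "HH #> (z \<otimes> y) = HH #> (z \<otimes> h0 \<otimes> x)" using rcos_eq[OF H_sub] y h0c x z_in by simp
    hence "HH #> (z \<otimes> h0 \<otimes> x) = HH #> (z \<otimes> y)" by simp
    hence i2: "II (HH #> (z \<otimes> h0 \<otimes> x)) e" using inc_iff y et y_def by simp
    show "e \<in> ?S" using e i1 i2 by simp
  qed
qed

lemma mult_card: assumes x: "x \<in> carrier G" and h0: "h0 \<in> HH"
  shows "card ((\<lambda>t. JJ #> (t \<otimes> h0 \<otimes> x)) ` KK) = card KK"
proof (rule card_image)
  have h0c: "h0 \<in> carrier G" using h0 H_car by simp
  show "inj_on (\<lambda>t. JJ #> (t \<otimes> h0 \<otimes> x)) KK"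
  proof (rule inj_onI)
    fix t t' assume t: "t \<in> KK" and t': "t' \<in> KK" and eq: "JJ #> (t \<otimes> h0 \<otimes> x) = JJ #> (t' \<otimes> h0 \<otimes> x)"
    have tc: "t \<in> carrier G" "t' \<in> carrier G" using t t' H_car by auto
    have "(t \<otimes> h0 \<otimes> x) \<otimes> inv (t' \<otimes> h0 \<otimes> x) \<in> JJ" using eq rcos_eq[OF J_sub] tc h0c x by simp
    moreover have "(t \<otimes> h0 \<otimes> x) \<otimes> inv (t' \<otimes> h0 \<otimes> x) = t \<otimes> inv t'"
      using tc h0c x by (simp add: m_assoc inv_mult_group xinvx)
    ultimately have j: "t \<otimes> inv t' \<in> JJ" by simp
    have "t \<otimes> inv t' \<in> HH" using t t' H_sub subgroup.m_closed subgroup.m_inv_closed by (metis IntD1)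
    hence "t \<otimes> inv t' \<noteq> z" using z_notin by auto
    hence "t \<otimes> inv t' = \<one>" using j J_eq by auto
    thus "t = t'" using tc by (metis inv_equality inv_inv inv_closed r_inv r_cancel one_closed)
  qed
qed

lemma multiplicity: "mg_edge_multiplicity VV EE II (card KK)"
  unfolding mg_edge_multiplicity_def
proof (intro allI impI)
  fix u w assume a: "mg_adj VV EE II u w"
  hence "u \<in> VV" unfolding mg_adj_def by simp
  then obtain x where x: "x \<in> carrier G" and u: "u = HH #> x" using V_elem by blast
  obtain h0 where h0: "h0 \<in> HH" and w: "w = HH #> (z \<otimes> h0 \<otimes> x)" using a adj_iff[OF x] u by blast
  have f: "finite KK" using H_fin by simp
  show "finite {e \<in> EE. II u e \<and> II w e} \<and> card {e \<in> EE. II u e \<and> II w e} = card KK"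
    using mult_set[OF x h0] mult_card[OF x h0] u w f by simp
qed

lemma order_eq: "ord a = card ((\<lambda>h. KK #> h) ` HH) * card KK"
proof -
  let ?C = "(\<lambda>h. KK #> h) ` HH"
  have U: "\<Union>?C = HH"
  proof
    show "\<Union>?C \<subseteq> HH"
      using H_sub subgroup.m_closed by (fastforce simp: r_coset_def)
    show "HH \<subseteq> \<Union>?C"
    proof
      fix h assume h: "h \<in> HH"
      hence "h \<in> KK #> h" using rcos_self[OF H_car[OF h] K_sub] by simp
      thus "h \<in> \<Union>?C" using h by blast
    qed
  qed
  have "card KK * card ?C = card (\<Union>?C)"
  proof (rule card_partition)
    show "finite ?C" using H_fin by simp
    show "finite (\<Union>?C)" using U H_fin by simp
  next
    fix c assume "c \<in> ?C"
      then obtain h where h: "h \<in> HH" and c: "c = KK #> h" by blast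
      have hc: "h \<in> carrier G" using h H_car by simp
      have "c = (\<lambda>k. k \<otimes> h) ` KK" using c by (auto simp: r_coset_def)
      moreover have "inj_on (\<lambda>k. k \<otimes> h) KK" using hc H_car by (intro inj_onI) (auto)
      ultimately show "card c = card KK" by (simp add: card_image)
  next
      fix c1 c2 assume "c1 \<in> ?C" "c2 \<in> ?C" "c1 \<noteq> c2"
      then obtain h1 h2 where h: "h1 \<in> HH" "h2 \<in> HH" and c: "c1 = KK #> h1" "c2 = KK #> h2" "c1 \<noteq> c2" by blast
      show "c1 \<inter> c2 = {}"
      proof (rule ccontr)
        assume "c1 \<inter> c2 \<noteq> {}"
        then obtain t where t: "t \<in> KK #> h1" "t \<in> KK #> h2" using c by blast
        have "KK #> h1 = KK #> t" using repr_independence[OF t(1) H_car[OF h(1)] K_sub] .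
        moreover have "KK #> h2 = KK #> t" using repr_independence[OF t(2) H_car[OF h(2)] K_sub] .
        ultimately show False using c by simp
      qed
  qed
  thus ?thesis using U H_card by (simp add: mult.commute)
qed

end


context rotp begin

lemma V_sub: "v \<in> VV \<Longrightarrow> v \<subseteq> carrier G"
  using V_elem H_sub subgroup.subset r_coset_subset_G by blast
lemma E_sub: "e \<in> EE \<Longrightarrow> e \<subseteq> carrier G"
  using E_elem J_sub subgroup.subset r_coset_subset_G by blast

lemma Hmul: "x \<in> carrier G \<Longrightarrow> g \<in> carrier G \<Longrightarrow> (HH #> x) #> g = HH #> (x \<otimes> g)"
  using coset_mult_assoc H_sub subgroup.subset by blast
lemma Jmul: "x \<in> carrier G \<Longrightarrow> g \<in> carrier G \<Longrightarrow> (JJ #> x) #> g = JJ #> (x \<otimes> g)"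
  using coset_mult_assoc J_sub subgroup.subset by blast

lemma rmul: "x \<in> carrier G \<Longrightarrow> y \<in> carrier G \<Longrightarrow> g \<in> carrier G \<Longrightarrow>
   HH #> (x \<otimes> g) = HH #> (y \<otimes> g) \<longleftrightarrow> HH #> x = HH #> y"
proof -
  assume c: "x \<in> carrier G" "y \<in> carrier G" "g \<in> carrier G"
  have "(x \<otimes> g) \<otimes> inv (y \<otimes> g) = x \<otimes> inv y" using c by (simp add: m_assoc inv_mult_group xinvx)
  thus ?thesis using rcos_eq[OF H_sub] c by simp
qed

lemma conj_hom: "x \<in> carrier G \<Longrightarrow> (\<lambda>y. inv x \<otimes> y \<otimes> x) \<in> hom G G"
  unfolding hom_def by (auto simp: m_assoc xinvx)

lemma rotary: "vertex_rotary G VV EE II (\<lambda>S g. S #> g) (\<lambda>T g. T #> g)"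
  unfolding vertex_rotary_def
proof (intro conjI)
  show "\<forall>v\<in>VV. \<forall>g\<in>carrier G. v #> g \<in> VV" using V_elem Hmul V_in by fastforce
  show "\<forall>e\<in>EE. \<forall>g\<in>carrier G. e #> g \<in> EE" using E_elem Jmul E_in by fastforce
  show "\<forall>v\<in>VV. v #> \<one> = v" using V_sub by simp
  show "\<forall>e\<in>EE. e #> \<one> = e" using E_sub by simp
  show "\<forall>v\<in>VV. \<forall>g\<in>carrier G. \<forall>h\<in>carrier G. v #> (g \<otimes> h) = v #> g #> h"
    using V_sub coset_mult_assoc by simp
  show "\<forall>e\<in>EE. \<forall>g\<in>carrier G. \<forall>h\<in>carrier G. e #> (g \<otimes> h) = e #> g #> h"
    using E_sub coset_mult_assoc by simp
  show "\<forall>v\<in>VV. \<forall>e\<in>EE. \<forall>g\<in>carrier G. II v e = II (v #> g) (e #> g)"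
  proof (intro ballI)
    fix v e g assume v: "v \<in> VV" and e: "e \<in> EE" and g: "g \<in> carrier G"
    obtain x where x: "x \<in> carrier G" and vx: "v = HH #> x" using V_elem v by blast
    obtain y where y: "y \<in> carrier G" and ey: "e = JJ #> y" using E_elem e by blast
    have "II v e \<longleftrightarrow> HH #> x = HH #> y \<or> HH #> x = HH #> (z \<otimes> y)" using inc_iff y vx ey by simp
    also have "\<dots> \<longleftrightarrow> HH #> (x \<otimes> g) = HH #> (y \<otimes> g) \<or> HH #> (x \<otimes> g) = HH #> (z \<otimes> y \<otimes> g)"
      using rmul x y g z_in by simp
    also have "\<dots> \<longleftrightarrow> II (v #> g) (e #> g)"
      using inc_iff[of "y \<otimes> g"] x y g z_in vx ey Hmul Jmul by (simp add: m_assoc)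
    finally show "II v e = II (v #> g) (e #> g)" .
  qed
  show "\<forall>v\<in>VV. \<forall>v'\<in>VV. \<exists>g\<in>carrier G. v #> g = v'"
  proof (intro ballI)
    fix v v' assume "v \<in> VV" "v' \<in> VV"
    then obtain x x' where x: "x \<in> carrier G" "x' \<in> carrier G" and v: "v = HH #> x" "v' = HH #> x'"
      using V_elem by metis
    have "v #> (inv x \<otimes> x') = v'" using Hmul x v by (simp add: xinvx)
    thus "\<exists>g\<in>carrier G. v #> g = v'" using x by blast
  qed
  show "\<forall>v\<in>VV. \<forall>e\<in>EE. \<forall>v'\<in>VV. \<forall>e'\<in>EE. II v e \<longrightarrow> II v' e' \<longrightarrow>
        (\<exists>g\<in>carrier G. v #> g = v' \<and> e #> g = e')"
  proof (intro ballI impI)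
    fix v e v' e' assume "v \<in> VV" "e \<in> EE" "v' \<in> VV" "e' \<in> EE" "II v e" "II v' e'"
    then obtain y y' where y: "y \<in> carrier G" "y' \<in> carrier G" and
      f: "v = HH #> y" "e = JJ #> y" "v' = HH #> y'" "e' = JJ #> y'" using flag_norm by metis
    have "v #> (inv y \<otimes> y') = v' \<and> e #> (inv y \<otimes> y') = e'" using Hmul Jmul y f by (simp add: xinvx)
    thus "\<exists>g\<in>carrier G. v #> g = v' \<and> e #> g = e'" using y by blast
  qed
  show "\<forall>v\<in>VV. (\<forall>e\<in>mg_edges_at EE II v. \<forall>e'\<in>mg_edges_at EE II v.
            \<exists>g\<in>carrier G. v #> g = v \<and> e #> g = e') \<and>
        (\<exists>c\<in>carrier G. v #> c = v \<and>
            (\<forall>g\<in>carrier G. v #> g = v \<longrightarrow>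
               (\<exists>n::int. \<forall>e\<in>mg_edges_at EE II v. e #> g = e #> (c [^] n))))"
  proof (rule ballI, rule conjI)
    fix v assume v: "v \<in> VV"
    show "\<forall>e\<in>mg_edges_at EE II v. \<forall>e'\<in>mg_edges_at EE II v. \<exists>g\<in>carrier G. v #> g = v \<and> e #> g = e'"
    proof (intro ballI)
      fix e e' assume "e \<in> mg_edges_at EE II v" "e' \<in> mg_edges_at EE II v"
      hence "e \<in> EE" "II v e" "e' \<in> EE" "II v e'" unfolding mg_edges_at_def by auto
      then obtain y y' where y: "y \<in> carrier G" "y' \<in> carrier G" and
        f: "v = HH #> y" "e = JJ #> y" "v = HH #> y'" "e' = JJ #> y'" using flag_norm by metis
      have "v #> (inv y \<otimes> y') = v \<and> e #> (inv y \<otimes> y') = e'" using Hmul Jmul y f by (simp add: xinvx)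
      thus "\<exists>g\<in>carrier G. v #> g = v \<and> e #> g = e'" using y by blast
    qed
  next
    fix v assume v: "v \<in> VV"
    obtain x where x: "x \<in> carrier G" and vx: "v = HH #> x" using V_elem v by blast
    define c where "c = inv x \<otimes> a \<otimes> x"
    have cc: "c \<in> carrier G" unfolding c_def using x a_in by simp
    have "HH #> (a \<otimes> x) = HH #> x" using rcos_eq[OF H_sub] a_in x generate.incl[of a "{a}" G]
      by (simp add: m_assoc)
    hence vc: "v #> c = v" using Hmul vx x cc unfolding c_def by (simp add: m_assoc xinvx a_in)
    have "\<forall>g\<in>carrier G. v #> g = v \<longrightarrow> (\<exists>n::int. \<forall>e\<in>mg_edges_at EE II v. e #> g = e #> (c [^] n))"
    proof (intro ballI impI)
      fix g assume g: "g \<in> carrier G" and vg: "v #> g = v"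
      hence "HH #> (x \<otimes> g) = HH #> x" using Hmul vx x by simp
      hence "x \<otimes> g \<otimes> inv x \<in> HH" using rcos_eq[OF H_sub] x g by simp
      then obtain n :: int where n: "x \<otimes> g \<otimes> inv x = a [^] n" using generate_pow[OF a_in] by blast
      have "g = inv x \<otimes> (x \<otimes> g \<otimes> inv x) \<otimes> x" using x g by (simp add: m_assoc invxx)
      also have "\<dots> = inv x \<otimes> (a [^] n) \<otimes> x" using n by simp
      also have "\<dots> = c [^] n" unfolding c_def
        using hom_int_pow[OF conj_hom[OF x] a_in is_group is_group] by simp
      finally show "\<exists>n::int. \<forall>e\<in>mg_edges_at EE II v. e #> g = e #> (c [^] n)" by blast
    qed
    thus "\<exists>c\<in>carrier G. v #> c = v \<and>
            (\<forall>g\<in>carrier G. v #> g = v \<longrightarrow> (\<exists>n::int. \<forall>e\<in>mg_edges_at EE II v. e #> g = e #> (c [^] n)))"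
      using cc vc by blast
  qed
qed

end


context rotp begin

lemma not_K2: assumes ne: "HH \<noteq> HZ" shows "\<not> is_K2_mult VV EE II lam"
proof
  assume K2: "is_K2_mult VV EE II lam"
  obtain u w where uw0: "u \<noteq> w \<and> VV = {u, w} \<and> finite EE \<and> card EE = lam \<and>
        (\<forall>e\<in>EE. mg_ends VV II e = {u, w})"
    using K2[unfolded is_K2_mult_def] by (elim exE) (rule that)
  have uw: "u \<noteq> w" "VV = {u, w}" using uw0 by simp_all
  define v0 where "v0 = HH #> \<one>"
  have nb: "\<And>h. h \<in> HH \<Longrightarrow> HH #> (z \<otimes> h \<otimes> \<one>) \<in> VV \<and> HH #> (z \<otimes> h \<otimes> \<one>) \<noteq> v0"
  proof -
    fix h assume h: "h \<in> HH"
    have "mg_adj VV EE II v0 (HH #> (z \<otimes> h \<otimes> \<one>))" unfolding v0_def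
      using adj_iff[OF one_closed, of "HH #> (z \<otimes> h \<otimes> \<one>)"] h by blast
    thus "HH #> (z \<otimes> h \<otimes> \<one>) \<in> VV \<and> HH #> (z \<otimes> h \<otimes> \<one>) \<noteq> v0" unfolding mg_adj_def by auto
  qed
  have v0V: "v0 \<in> VV" unfolding v0_def using V_in by simp
  have all: "\<And>h. h \<in> HH \<Longrightarrow> z \<otimes> h \<otimes> z \<in> HH"
  proof -
    fix h assume h: "h \<in> HH"
    have hc: "h \<in> carrier G" using h H_car by simp
    have one: "\<one> \<in> HH" using subgroup.one_closed[OF H_sub] .
    have "HH #> (z \<otimes> h \<otimes> \<one>) = HH #> (z \<otimes> \<one> \<otimes> \<one>)"
      using nb[OF h] nb[OF one] v0V uw by auto
    hence "(z \<otimes> h \<otimes> \<one>) \<otimes> inv (z \<otimes> \<one> \<otimes> \<one>) \<in> HH" using rcos_eq[OF H_sub] hc z_in by simp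
    thus "z \<otimes> h \<otimes> z \<in> HH" using hc z_in by (simp add: invz)
  qed
  have "HH = HZ"
  proof
    show "HH \<subseteq> HZ"
    proof
      fix h assume h: "h \<in> HH"
      show "h \<in> HZ" using HZ_mem[of h] all[OF h] H_car[OF h] by simp
    qed
    show "HZ \<subseteq> HH" using all by (auto simp: HZ_eq)
  qed
  thus False using ne by simp
qed

lemma not_cycle: assumes o3: "ord a \<ge> 3" shows "\<not> is_simple_cycle VV EE II"
proof
  assume "is_simple_cycle VV EE II"
  hence simp: "mg_simple VV EE II" and val2: "mg_valency VV EE II 2" unfolding is_simple_cycle_def by auto
  define v0 where "v0 = HH #> \<one>"
  define w0 where "w0 = HH #> (z \<otimes> \<one> \<otimes> \<one>)"
  have one: "\<one> \<in> HH" using subgroup.one_closed[OF H_sub] .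
  have "\<exists>h\<in>HH. w0 = HH #> (z \<otimes> h \<otimes> \<one>)" using one unfolding w0_def by blast
  hence adj: "mg_adj VV EE II v0 w0" unfolding v0_def using adj_iff[OF one_closed, of w0] by simp
  hence v0V: "v0 \<in> VV" and w0V: "w0 \<in> VV" and ne: "v0 \<noteq> w0" unfolding mg_adj_def by auto
  have "card {w. mg_adj VV EE II v0 w} = 2" using val2 v0V unfolding mg_valency_def by blast
  hence k2: "card ((\<lambda>h. KK #> h) ` HH) = 2" using nbrs_card[of \<one>] unfolding v0_def by simp
  define S where "S = {e \<in> EE. II v0 e \<and> II w0 e}"
  have "finite S \<and> card S = card KK"
    using multiplicity[unfolded mg_edge_multiplicity_def, rule_format, OF adj] unfolding S_def .
  hence Sf: "finite S" and Sc: "card S = card KK" by auto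
  have ends: "\<And>e. e \<in> S \<Longrightarrow> mg_ends VV II e = {v0, w0}"
  proof -
    fix e assume e: "e \<in> S"
    have f: "finite (mg_ends VV II e)" "card (mg_ends VV II e) = 2"
      using simp e unfolding mg_simple_def S_def by auto
    have sub: "{v0, w0} \<subseteq> mg_ends VV II e" using e v0V w0V unfolding S_def mg_ends_def by auto
    have "card {v0, w0} = 2" using ne by simp
    thus "mg_ends VV II e = {v0, w0}" using card_subset_eq[OF f(1) sub] f(2) by simp
  qed
  have "\<forall>e1\<in>S. \<forall>e2\<in>S. e1 = e2"
  proof (intro ballI)
    fix e1 e2 assume e: "e1 \<in> S" "e2 \<in> S"
    have "mg_ends VV II e1 = mg_ends VV II e2" using ends[OF e(1)] ends[OF e(2)] by simp
    moreover have "e1 \<in> EE" "e2 \<in> EE" using e unfolding S_def by auto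
    ultimately show "e1 = e2" using simp unfolding mg_simple_def by blast
  qed
  hence "card S \<le> Suc 0" using card_le_Suc0_iff_eq[OF Sf] by blast
  hence "ord a \<le> 2" using order_eq k2 Sc by simp
  thus False using o3 by simp
qed

end


theorem lemma3p2:
  fixes G :: "('g, 'b) monoid_scheme" and a z :: 'g
    and H J Hz :: "'g set" and k lam :: nat
  assumes grp: "group G"
    and a_in: "a \<in> carrier G" and z_in: "z \<in> carrier G"
    and gen: "generate G {a, z} = carrier G"
    and a_fin: "group.ord G a \<noteq> 0"
    and z_ord: "group.ord G z = 2"
    and z_notin: "z \<notin> generate G {a}"
    and H_def: "H = generate G {a}"
    and J_def: "J = generate G {z}"
    and Hz_def: "Hz = (inv\<^bsub>G\<^esub> z) <#\<^bsub>G\<^esub> (H #>\<^bsub>G\<^esub> z)"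
    and k_def: "k = card ((\<lambda>h. (H \<inter> Hz) #>\<^bsub>G\<^esub> h) ` H)"
    and lam_def: "lam = card (H \<inter> Hz)"
  shows "vertex_rotary G (rcosets\<^bsub>G\<^esub> H) (rcosets\<^bsub>G\<^esub> J) (cos_inc G H J)
           (\<lambda>S g. S #>\<^bsub>G\<^esub> g) (\<lambda>T g. T #>\<^bsub>G\<^esub> g)
       \<and> mg_valency (rcosets\<^bsub>G\<^esub> H) (rcosets\<^bsub>G\<^esub> J) (cos_inc G H J) k
       \<and> mg_edge_multiplicity (rcosets\<^bsub>G\<^esub> H) (rcosets\<^bsub>G\<^esub> J) (cos_inc G H J) lam
       \<and> group.ord G a = k * lam
       \<and> (group.ord G a \<ge> 3 \<and> H \<noteq> Hz \<longrightarrow>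
            \<not> is_K2_mult (rcosets\<^bsub>G\<^esub> H) (rcosets\<^bsub>G\<^esub> J) (cos_inc G H J) lam
          \<and> \<not> is_simple_cycle (rcosets\<^bsub>G\<^esub> H) (rcosets\<^bsub>G\<^esub> J) (cos_inc G H J))"
proof -
  have R: "rotp G a z" unfolding rotp_def rotp_axioms_def
    using grp a_in z_in a_fin z_ord z_notin by simp
  interpret R: rotp G a z by (rule R)
  show ?thesis unfolding H_def J_def Hz_def k_def lam_def
    apply (intro conjI impI)
          apply (rule R.rotary)
         apply (rule R.valency)
        apply (rule R.multiplicity)
       apply (rule R.order_eq)
      apply (rule R.not_K2, simp)
     apply (rule R.not_cycle, simp)
    done
qed

end
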